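(* Let $(A,B)$ be a Katsura pair. Then the KEP-action $(G_B,E_A)$ is contracting if and only if $(G_{B,\infty},E_{A_\infty})$ is contracting.
   Context: Katsura pair: $N\in\mathbb{N}$, $A\in M_N(\mathbb{N})$ (nonnegative integers), $B\in M_N(\mathbb{Z})$ with $A_{ij}=0\Rightarrow B_{ij}=0$. Graph $E_A$: vertices $\{1,\dots,N\}$, edges $e_{i,j,m}$ ($0\le m<A_{ij}$), $r=i$, $s=j$; $B_e=B_{r(e)s(e)}$. The group bundle $\mathbb{Z}\times E_A^0$ (elements $a_i^k$) acts by $a_i^k\cdot e_{i,j,m}=e_{i,j,\hat m}$, $a_i^k|_{e_{i,j,m}}=a_j^{\hat k}$ with $kB_{ij}+m=\hat kA_{ij}+\hat m$, $0\le\hat m<A_{ij}$, extended recursively to finite paths via $g\cdot(e\nu)=(g\cdot e)(g|_e\cdot\nu)$, $g|_{e\nu}=(g|_e)|_\nu$. $G_B$ is the faithful quotient; $(G_B,E_A)$ is the KEP-action; $(G_B)_i$ its isotropy group at $i$. Infinite part: $E^0_{A,\infty}=\{i:(G_B)_i\text{ infinite}\}$ (then $(G_B)_i=\mathbb{Z}$); $E_{A,\infty}=E_{A_\infty}$ is the subgraph of $E_A$ with vertices $E^0_{A,\infty}$ and edges $\{e:s(e)\in E^0_{A,\infty},B_e\ne0\}$ (its adjacency matrix is $A_\infty$). $G_{B,\infty}=\{g\in G_B: d(g)\in E^0_{A,\infty}\}=\mathbb{Z}\times E^0_{A,\infty}$, and the KEP formulas restrict to an action-restriction pair (possibly non-faithful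 action with restrictions) $(G_{B,\infty},E_{A_\infty})$. Contracting (for a groupoid $G$ with an action-restriction pair on a finite graph $E$): there is a finite $F\subseteq G$ such that for every $g\in G$ there is $n\ge0$ with $g|_\mu\in F$ for all paths $\mu\in d(g)E^k$, $k\ge n$. *)

theory Defs
  imports Main
begin

text \<open>Vertices are 1..N; an edge e_{i,j,m} is the triple (i,j,m) with
  r(e) = i, s(e) = j, 0 <= m < A i j. Finite paths are lists of edges e_1 ... e_k with
  s(e_t) = r(e_{t+1}); the path of length 0 at a vertex v is the empty list.
  The group bundle Z x E^0 has elements (k,i) standing for a_i^k.\<close>

type_synonym edge = "nat \<times> nat \<times> nat"

definition katsura_pair :: "nat \<Rightarrow> (nat \<Rightarrow> nat \<Rightarrow> nat) \<Rightarrow> (nat \<Rightarrow> nat \<Rightarrow> int) \<Rightarrow> bool" where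
  "katsura_pair N A B \<longleftrightarrow> (\<forall>i\<in>{1..N}. \<forall>j\<in>{1..N}. A i j = 0 \<longrightarrow> B i j = 0)"

definition src :: "edge \<Rightarrow> nat" where "src e = fst (snd e)"
definition rng :: "edge \<Rightarrow> nat" where "rng e = fst e"

definition kep_edges :: "nat \<Rightarrow> (nat \<Rightarrow> nat \<Rightarrow> nat) \<Rightarrow> edge set" where
  "kep_edges N A = {(i,j,m). i \<in> {1..N} \<and> j \<in> {1..N} \<and> m < A i j}"

definition paths :: "nat set \<Rightarrow> edge set \<Rightarrow> nat \<Rightarrow> nat \<Rightarrow> edge list set" where
  "paths V Ed v k = {\<mu>. v \<in> V \<and> length \<mu> = k \<and> set \<mu> \<subseteq> Ed \<and>
      (\<mu> \<noteq> [] \<longrightarrow> rng (hd \<mu>) = v) \<and>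
      (\<forall>t. Suc t < k \<longrightarrow> src (\<mu> ! t) = rng (\<mu> ! Suc t))}"

text \<open>a_i^k . e_{i,j,m} = e_{i,j,mhat}, a_i^k|_e = a_j^{khat}, k B_ij + m = khat A_ij + mhat.\<close>
definition kep_edge_act :: "(nat \<Rightarrow> nat \<Rightarrow> nat) \<Rightarrow> (nat \<Rightarrow> nat \<Rightarrow> int) \<Rightarrow> int \<Rightarrow> edge \<Rightarrow> edge" where
  "kep_edge_act A B k e = (case e of (i,j,m) \<Rightarrow>
      (i, j, nat ((k * B i j + int m) mod int (A i j))))"

definition kep_edge_res :: "(nat \<Rightarrow> nat \<Rightarrow> nat) \<Rightarrow> (nat \<Rightarrow> nat \<Rightarrow> int) \<Rightarrow> int \<Rightarrow> edge \<Rightarrow> int" where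
  "kep_edge_res A B k e = (case e of (i,j,m) \<Rightarrow> (k * B i j + int m) div int (A i j))"

fun kep_act :: "(nat \<Rightarrow> nat \<Rightarrow> nat) \<Rightarrow> (nat \<Rightarrow> nat \<Rightarrow> int) \<Rightarrow> int \<Rightarrow> edge list \<Rightarrow> edge list" where
  "kep_act A B k [] = []"
| "kep_act A B k (e # \<nu>) = kep_edge_act A B k e # kep_act A B (kep_edge_res A B k e) \<nu>"

fun kep_res_int :: "(nat \<Rightarrow> nat \<Rightarrow> nat) \<Rightarrow> (nat \<Rightarrow> nat \<Rightarrow> int) \<Rightarrow> int \<Rightarrow> edge list \<Rightarrow> int" where
  "kep_res_int A B k [] = k"
| "kep_res_int A B k (e # \<nu>) = kep_res_int A B (kep_edge_res A B k e) \<nu>"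

definition kep_restr :: "(nat \<Rightarrow> nat \<Rightarrow> nat) \<Rightarrow> (nat \<Rightarrow> nat \<Rightarrow> int) \<Rightarrow> int \<times> nat \<Rightarrow> edge list \<Rightarrow> int \<times> nat" where
  "kep_restr A B g \<mu> = (kep_res_int A B (fst g) \<mu>, if \<mu> = [] then snd g else src (last \<mu>))"

text \<open>The faithful quotient: identify a_i^k and a_i^l when they act identically on all finite
  paths of E_A with range i.\<close>
definition kep_rel :: "nat \<Rightarrow> (nat \<Rightarrow> nat \<Rightarrow> nat) \<Rightarrow> (nat \<Rightarrow> nat \<Rightarrow> int) \<Rightarrow> ((int \<times> nat) \<times> (int \<times> nat)) set" where
  "kep_rel N A B = {(g,h). g \<in> UNIV \<times> {1..N} \<and> h \<in> UNIV \<times> {1..N} \<and> snd g = snd h \<and>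
      (\<forall>n \<mu>. \<mu> \<in> paths {1..N} (kep_edges N A) (snd g) n \<longrightarrow> kep_act A B (fst g) \<mu> = kep_act A B (fst h) \<mu>)}"

definition G_B :: "nat \<Rightarrow> (nat \<Rightarrow> nat \<Rightarrow> nat) \<Rightarrow> (nat \<Rightarrow> nat \<Rightarrow> int) \<Rightarrow> (int \<times> nat) set set" where
  "G_B N A B = (UNIV \<times> {1..N}) // kep_rel N A B"

text \<open>Isotropy group of G_B at i (G_B is a group bundle, so all elements over i).\<close>
definition G_B_iso :: "nat \<Rightarrow> (nat \<Rightarrow> nat \<Rightarrow> nat) \<Rightarrow> (nat \<Rightarrow> nat \<Rightarrow> int) \<Rightarrow> nat \<Rightarrow> (int \<times> nat) set set" where
  "G_B_iso N A B i = (UNIV \<times> {i}) // kep_rel N A B"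

definition G_B_d :: "(int \<times> nat) set \<Rightarrow> nat" where
  "G_B_d c = snd (SOME g. g \<in> c)"

definition G_B_restr :: "nat \<Rightarrow> (nat \<Rightarrow> nat \<Rightarrow> nat) \<Rightarrow> (nat \<Rightarrow> nat \<Rightarrow> int) \<Rightarrow> (int \<times> nat) set \<Rightarrow> edge list \<Rightarrow> (int \<times> nat) set" where
  "G_B_restr N A B c \<mu> = kep_rel N A B `` {kep_restr A B (SOME g. g \<in> c) \<mu>}"

definition inf_vertices :: "nat \<Rightarrow> (nat \<Rightarrow> nat \<Rightarrow> nat) \<Rightarrow> (nat \<Rightarrow> nat \<Rightarrow> int) \<Rightarrow> nat set" where
  "inf_vertices N A B = {i \<in> {1..N}. infinite (G_B_iso N A B i)}"

definition inf_edges :: "nat \<Rightarrow> (nat \<Rightarrow> nat \<Rightarrow> nat) \<Rightarrow> (nat \<Rightarrow> nat \<Rightarrow> int) \<Rightarrow> edge set" where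
  "inf_edges N A B = {e \<in> kep_edges N A. src e \<in> inf_vertices N A B \<and> B (rng e) (src e) \<noteq> 0}"

definition contracting :: "'g set \<Rightarrow> ('g \<Rightarrow> nat) \<Rightarrow> (nat \<Rightarrow> nat \<Rightarrow> edge list set) \<Rightarrow> ('g \<Rightarrow> edge list \<Rightarrow> 'g) \<Rightarrow> bool" where
  "contracting G d P res \<longleftrightarrow>
     (\<exists>F. F \<subseteq> G \<and> finite F \<and>
        (\<forall>g\<in>G. \<exists>n. \<forall>k\<ge>n. \<forall>\<mu>\<in>P (d g) k. res g \<mu> \<in> F))"

definition KEP_contracting :: "nat \<Rightarrow> (nat \<Rightarrow> nat \<Rightarrow> nat) \<Rightarrow> (nat \<Rightarrow> nat \<Rightarrow> int) \<Rightarrow> bool" where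
  "KEP_contracting N A B =
     contracting (G_B N A B) G_B_d (paths {1..N} (kep_edges N A)) (G_B_restr N A B)"

definition KEP_inf_contracting :: "nat \<Rightarrow> (nat \<Rightarrow> nat \<Rightarrow> nat) \<Rightarrow> (nat \<Rightarrow> nat \<Rightarrow> int) \<Rightarrow> bool" where
  "KEP_inf_contracting N A B =
     contracting (UNIV \<times> inf_vertices N A B) snd
        (paths (inf_vertices N A B) (inf_edges N A B)) (kep_restr A B)"

end

theory Submission
  imports Defs
begin


lemma paths_Nil: "[] \<in> paths V Ed v k \<longleftrightarrow> v \<in> V \<and> k = 0"
  by (auto simp: paths_def)

lemma paths_Cons:
  assumes "\<forall>e\<in>Ed. src e \<in> V"
  shows "e#\<nu> \<in> paths V Ed v k \<longleftrightarrow>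
     (\<exists>k'. k = Suc k' \<and> v \<in> V \<and> e \<in> Ed \<and> rng e = v \<and> \<nu> \<in> paths V Ed (src e) k')"
proof
  assume h: "e#\<nu> \<in> paths V Ed v k"
  then obtain k' where k: "k = Suc k'" "length \<nu> = k'" by (auto simp: paths_def)
  from h k have c: "\<forall>t. Suc t < Suc k' \<longrightarrow> src ((e#\<nu>)!t) = rng ((e#\<nu>)!Suc t)"
    by (simp add: paths_def)
  have 1: "\<nu> \<noteq> [] \<longrightarrow> rng (hd \<nu>) = src e"
    using c[rule_format, of 0] k by (cases \<nu>) auto
  have 2: "\<forall>t. Suc t < k' \<longrightarrow> src (\<nu>!t) = rng (\<nu>!Suc t)"
  proof (intro allI impI)
    fix t assume "Suc t < k'"
    then show "src (\<nu>!t) = rng (\<nu>!Suc t)" using c[rule_format, of "Suc t"] by simp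
  qed
  have 3: "e \<in> Ed" "v \<in> V" "rng e = v" "set \<nu> \<subseteq> Ed" using h by (auto simp: paths_def)
  then have "src e \<in> V" using assms by auto
  then show "\<exists>k'. k = Suc k' \<and> v \<in> V \<and> e \<in> Ed \<and> rng e = v \<and> \<nu> \<in> paths V Ed (src e) k'"
    using 1 2 3 k by (auto simp: paths_def)
next
  assume "\<exists>k'. k = Suc k' \<and> v \<in> V \<and> e \<in> Ed \<and> rng e = v \<and> \<nu> \<in> paths V Ed (src e) k'"
  then obtain k' where h: "k = Suc k'" "v \<in> V" "e \<in> Ed" "rng e = v" "\<nu> \<in> paths V Ed (src e) k'"
    by blast
  have c: "\<forall>t. Suc t < Suc k' \<longrightarrow> src ((e#\<nu>)!t) = rng ((e#\<nu>)!Suc t)"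
  proof (intro allI impI)
    fix t assume t: "Suc t < Suc k'"
    show "src ((e#\<nu>)!t) = rng ((e#\<nu>)!Suc t)"
    proof (cases t)
      case 0
      then have "\<nu> \<noteq> []" using t h(5) by (auto simp: paths_def)
      then show ?thesis using 0 h(5) by (auto simp: paths_def hd_conv_nth)
    next
      case (Suc t')
      then show ?thesis using t h(5) by (auto simp: paths_def)
    qed
  qed
  then show "e#\<nu> \<in> paths V Ed v k" using h by (auto simp: paths_def)
qed

lemma src_kep_edges: "\<forall>e\<in>kep_edges N A. src e \<in> {1..N}"
  by (auto simp: kep_edges_def src_def)

lemma src_inf_edges: "\<forall>e\<in>inf_edges N A B. src e \<in> inf_vertices N A B"
  by (auto simp: inf_edges_def)

lemma kep_rel_equiv: "equiv (UNIV \<times> {1..N}) (kep_rel N A B)"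
  unfolding equiv_def refl_on_def sym_def trans_def kep_rel_def by auto

lemma valid_path:
  "\<mu> \<in> paths V (kep_edges N A) v k \<Longrightarrow> \<forall>e\<in>set \<mu>. snd (snd e) < A (fst e) (fst (snd e))"
  by (fastforce simp: paths_def kep_edges_def)

lemma kep_act_add:
  "\<forall>e\<in>set \<mu>. snd (snd e) < A (fst e) (fst (snd e)) \<Longrightarrow>
   kep_act A B t (kep_act A B x \<mu>) = kep_act A B (x+t) \<mu>"
proof (induction \<mu> arbitrary: x t)
  case Nil
  then show ?case by simp
next
  case (Cons e \<nu>)
  obtain i j m where e: "e = (i,j,m)" by (cases e) auto
  define a where "a = int (A i j)"
  have apos: "a > 0" using Cons.prems e a_def by auto
  define w where "w = x * B i j + int m"
  have nn: "int (nat (w mod a)) = w mod a" using apos by simp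
  have 1: "kep_edge_act A B t (kep_edge_act A B x e) = kep_edge_act A B (x+t) e"
  proof -
    have "(t * B i j + w mod a) mod a = (t * B i j + w) mod a" by (simp add: mod_add_right_eq)
    also have "t * B i j + w = (x+t) * B i j + int m" by (simp add: w_def algebra_simps)
    finally show ?thesis unfolding kep_edge_act_def e using nn
      by (simp add: a_def w_def)
  qed
  have 2: "kep_edge_res A B x e + kep_edge_res A B t (kep_edge_act A B x e) = kep_edge_res A B (x+t) e"
  proof -
    have eq: "(x+t) * B i j + int m = (t * B i j + w mod a) + (w div a) * a"
      using div_mult_mod_eq[of w a] by (simp add: w_def algebra_simps)
    have "((t * B i j + w mod a) + (w div a) * a) div a = (t * B i j + w mod a) div a + w div a"
      using div_mult_self1[of a "t * B i j + w mod a" "w div a"] apos by linarith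
    then have "((x+t) * B i j + int m) div a = (t * B i j + w mod a) div a + w div a"
      by (simp only: eq)
    then show ?thesis unfolding kep_edge_act_def kep_edge_res_def e using nn
      by (simp add: a_def w_def)
  qed
  show ?case using Cons 1 2 by (simp add: add.commute)
qed

lemma restr_Cons: "kep_restr A B g (e#\<nu>) = kep_restr A B (kep_edge_res A B (fst g) e, src e) \<nu>"
  by (simp add: kep_restr_def)

lemma periodic:
  fixes f :: "int \<Rightarrow> 'a"
  assumes "\<And>z. f (z + d) = f z"
  shows "f (z + q*d) = f z"
proof (induction q rule: int_induct[where k=0])
  case base then show ?case by simp
next
  case (step1 i)
  have "f (z + (i+1)*d) = f ((z + i*d) + d)" by (simp add: algebra_simps)
  then show ?case using assms step1 by simp
next
  case (step2 i)
  have "f (z + i*d) = f ((z + (i - 1)*d) + d)" by (simp add: algebra_simps)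
  then show ?case using assms step2 by simp
qed



lemma G_B_iso_eq: "G_B_iso N A B l = (\<lambda>z. kep_rel N A B `` {(z,l)}) ` UNIV"
  unfolding G_B_iso_def quotient_def by auto

lemma fin_iso:
  assumes xy: "x \<noteq> y" and r: "((x,l),(y,l)) \<in> kep_rel N A B"
  shows "finite (G_B_iso N A B l)"
proof -
  define d where "d = y - x"
  have dnz: "d \<noteq> 0" using xy d_def by simp
  have l: "l \<in> {1..N}" using r by (auto simp: kep_rel_def)
  have H: "\<And>n \<mu>. \<mu> \<in> paths {1..N} (kep_edges N A) l n \<Longrightarrow> kep_act A B x \<mu> = kep_act A B y \<mu>"
    using r by (auto simp: kep_rel_def)
  have per: "kep_act A B (z + d) \<mu> = kep_act A B z \<mu>"
    if \<mu>: "\<mu> \<in> paths {1..N} (kep_edges N A) l n" for \<mu> n z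
  proof -
    have v: "\<forall>e\<in>set \<mu>. snd (snd e) < A (fst e) (fst (snd e))" using valid_path[OF \<mu>] .
    have "z + d = y + (z - x)" by (simp add: d_def)
    then have "kep_act A B (z + d) \<mu> = kep_act A B (y + (z - x)) \<mu>" by (rule arg_cong[where f="\<lambda>w. kep_act A B w \<mu>"])
    also have "\<dots> = kep_act A B (z - x) (kep_act A B y \<mu>)" using kep_act_add[OF v] by simp
    also have "\<dots> = kep_act A B (z - x) (kep_act A B x \<mu>)" using H[OF \<mu>] by simp
    also have "\<dots> = kep_act A B (x + (z - x)) \<mu>" using kep_act_add[OF v] by simp
    finally show ?thesis by simp
  qed
  have per2: "kep_act A B z \<mu> = kep_act A B (z mod d) \<mu>"
    if \<mu>: "\<mu> \<in> paths {1..N} (kep_edges N A) l n" for \<mu> n z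
  proof -
    have "kep_act A B (z mod d + (z div d) * d) \<mu> = kep_act A B (z mod d) \<mu>"
      using periodic[of "\<lambda>z. kep_act A B z \<mu>" d] per[OF \<mu>] by blast
    then show ?thesis by (simp add: mod_div_mult_eq)
  qed
  have cls: "kep_rel N A B `` {(z,l)} = kep_rel N A B `` {(z mod d,l)}" for z
  proof -
    have "\<forall>n \<mu>. \<mu> \<in> paths {1..N} (kep_edges N A) l n \<longrightarrow> kep_act A B z \<mu> = kep_act A B (z mod d) \<mu>"
      using per2 by blast
    then have "((z,l),(z mod d,l)) \<in> kep_rel N A B"
      using l unfolding kep_rel_def by simp
    then show ?thesis using equiv_class_eq[OF kep_rel_equiv] by blast
  qed
  have S: "finite ((\<lambda>z. z mod d) ` UNIV)"
  proof (rule finite_subset)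
    show "(\<lambda>z. z mod d) ` UNIV \<subseteq> {-\<bar>d\<bar>..\<bar>d\<bar>}"
    proof
      fix w assume "w \<in> (\<lambda>z. z mod d) ` UNIV"
      then obtain z where w: "w = z mod d" by blast
      have "\<bar>z mod d\<bar> < \<bar>d\<bar>" using abs_mod_less[OF dnz] .
      then show "w \<in> {-\<bar>d\<bar>..\<bar>d\<bar>}" using w by (auto simp: abs_less_iff)
    qed
  qed simp
  have "G_B_iso N A B l \<subseteq> (\<lambda>w. kep_rel N A B `` {(w,l)}) ` ((\<lambda>z. z mod d) ` UNIV)"
    unfolding G_B_iso_eq using cls by auto
  then show ?thesis using S finite_subset by blast
qed

lemma inf_inj:
  "l \<in> inf_vertices N A B \<Longrightarrow> ((x,l),(y,l)) \<in> kep_rel N A B \<Longrightarrow> x = y"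
  using fin_iso unfolding inf_vertices_def by blast

lemma key:
  assumes j: "j \<in> {1..N}" "j \<notin> inf_vertices N A B" and l: "l \<in> inf_vertices N A B"
    and m: "m < A j l"
  shows "B j l = 0"
proof -
  have fin: "finite (G_B_iso N A B j)" using j unfolding inf_vertices_def by auto
  have "\<not> inj (\<lambda>z::int. kep_rel N A B `` {(z,j)})"
  proof
    assume "inj (\<lambda>z::int. kep_rel N A B `` {(z,j)})"
    then have "infinite ((\<lambda>z::int. kep_rel N A B `` {(z,j)}) ` UNIV)"
      using finite_imageD infinite_UNIV_int by blast
    then show False using fin by (simp add: G_B_iso_eq)
  qed
  then obtain x y where xy: "x \<noteq> y" "kep_rel N A B `` {(x,j)} = kep_rel N A B `` {(y,j)}"
    unfolding inj_def by blast
  have "(y,j) \<in> kep_rel N A B `` {(y,j)}" using j unfolding kep_rel_def by auto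
  then have r: "((x,j),(y,j)) \<in> kep_rel N A B" using xy by auto
  have l1: "l \<in> {1..N}" using l by (auto simp: inf_vertices_def)
  define e where "e = (j,l,m)"
  have e: "e \<in> kep_edges N A" "rng e = j" "src e = l"
    using j l1 m by (auto simp: e_def kep_edges_def rng_def src_def)
  have act: "kep_act A B x (e#\<nu>) = kep_act A B y (e#\<nu>)"
    if "\<nu> \<in> paths {1..N} (kep_edges N A) l n" for \<nu> n
  proof -
    have "e#\<nu> \<in> paths {1..N} (kep_edges N A) j (Suc n)"
      using paths_Cons[OF src_kep_edges] that e j by auto
    moreover have "\<forall>n \<mu>. \<mu> \<in> paths {1..N} (kep_edges N A) j n \<longrightarrow> kep_act A B x \<mu> = kep_act A B y \<mu>"
      using r unfolding kep_rel_def by simp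
    ultimately show ?thesis by blast
  qed
  have "((kep_edge_res A B x e, l), (kep_edge_res A B y e, l)) \<in> kep_rel N A B"
    using act l1 unfolding kep_rel_def by auto
  then have res: "kep_edge_res A B x e = kep_edge_res A B y e" using inf_inj[OF l] by blast
  have "[] \<in> paths {1..N} (kep_edges N A) l 0" using l1 by (simp add: paths_Nil)
  then have ea: "kep_edge_act A B x e = kep_edge_act A B y e" using act by fastforce
  define a where "a = int (A j l)"
  have apos: "a > 0" using m a_def by auto
  have "nat ((x * B j l + int m) mod a) = nat ((y * B j l + int m) mod a)"
    using ea unfolding kep_edge_act_def e_def a_def by simp
  moreover have "(x * B j l + int m) mod a \<ge> 0" "(y * B j l + int m) mod a \<ge> 0"
    using apos by simp_all
  ultimately have md: "(x * B j l + int m) mod a = (y * B j l + int m) mod a"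
    by simp
  have dv: "(x * B j l + int m) div a = (y * B j l + int m) div a"
    using res unfolding kep_edge_res_def e_def a_def by simp
  have "x * B j l + int m = y * B j l + int m"
    by (metis md dv div_mult_mod_eq)
  then have "(x - y) * B j l = 0" by (simp add: algebra_simps)
  then show ?thesis using xy by simp
qed



lemma paths_mono: "V \<subseteq> V' \<Longrightarrow> Ed \<subseteq> Ed' \<Longrightarrow> \<mu> \<in> paths V Ed v k \<Longrightarrow> \<mu> \<in> paths V' Ed' v k"
  by (auto simp: paths_def)

lemma inf_sub: "inf_vertices N A B \<subseteq> {1..N}" "inf_edges N A B \<subseteq> kep_edges N A"
  by (auto simp: inf_vertices_def inf_edges_def)

lemma res_zero:
  assumes "e \<in> kep_edges N A" "k = 0 \<or> B (rng e) (src e) = 0"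
  shows "kep_edge_res A B k e = 0"
  using assms by (auto simp: kep_edges_def kep_edge_res_def rng_def src_def div_pos_pos_trivial)

definition good :: "nat \<Rightarrow> (nat \<Rightarrow> nat \<Rightarrow> nat) \<Rightarrow> (nat \<Rightarrow> nat \<Rightarrow> int) \<Rightarrow> int \<times> nat \<Rightarrow> bool" where
  "good N A B h \<longleftrightarrow> snd h \<in> {1..N} \<and> (snd h \<notin> inf_vertices N A B \<or> fst h = 0)"

lemma good_step:
  assumes "good N A B h" "e \<in> kep_edges N A" "rng e = snd h"
  shows "good N A B (kep_edge_res A B (fst h) e, src e)"
proof -
  have s: "src e \<in> {1..N}" using assms(2) src_kep_edges by blast
  have "kep_edge_res A B (fst h) e = 0" if "src e \<in> inf_vertices N A B"
  proof (cases "fst h = 0")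
    case True then show ?thesis using res_zero assms(2) by blast
  next
    case False
    then have "snd h \<notin> inf_vertices N A B" "snd h \<in> {1..N}" using assms(1) by (auto simp: good_def)
    moreover obtain i j m where e: "e = (i,j,m)" by (cases e) auto
    ultimately have "B (rng e) (src e) = 0" using key[of i N A B j m] assms(2,3) that
      by (auto simp: kep_edges_def rng_def src_def)
    then show ?thesis using res_zero assms(2) by blast
  qed
  then show ?thesis using s by (auto simp: good_def)
qed

lemma good_pres:
  "good N A B h \<Longrightarrow> \<mu> \<in> paths {1..N} (kep_edges N A) (snd h) k \<Longrightarrow> good N A B (kep_restr A B h \<mu>)"
proof (induction \<mu> arbitrary: h k)
  case Nil
  then show ?case by (simp add: kep_restr_def)
next
  case (Cons e \<nu>)
  then obtain k' where "e \<in> kep_edges N A" "rng e = snd h" "\<nu> \<in> paths {1..N} (kep_edges N A) (src e) k'"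
    using paths_Cons[OF src_kep_edges] by blast
  then show ?case using Cons.IH[of "(kep_edge_res A B (fst h) e, src e)"] good_step[OF Cons.prems(1)]
    by (simp add: restr_Cons)
qed

lemma split_path:
  "snd h \<in> inf_vertices N A B \<Longrightarrow> \<mu> \<in> paths {1..N} (kep_edges N A) (snd h) k \<Longrightarrow>
   \<mu> \<in> paths (inf_vertices N A B) (inf_edges N A B) (snd h) k \<or> good N A B (kep_restr A B h \<mu>)"
proof (induction \<mu> arbitrary: h k)
  case Nil
  then show ?case by (simp add: paths_Nil)
next
  case (Cons e \<nu>)
  then obtain k' where k': "k = Suc k'" "e \<in> kep_edges N A" "rng e = snd h"
      "\<nu> \<in> paths {1..N} (kep_edges N A) (src e) k'"
    using paths_Cons[OF src_kep_edges] by blast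
  define h' where "h' = (kep_edge_res A B (fst h) e, src e)"
  have r: "kep_restr A B h (e#\<nu>) = kep_restr A B h' \<nu>" by (simp add: restr_Cons h'_def)
  show ?case
  proof (cases "e \<in> inf_edges N A B")
    case True
    then have "src e \<in> inf_vertices N A B" using src_inf_edges by blast
    then have "\<nu> \<in> paths (inf_vertices N A B) (inf_edges N A B) (src e) k' \<or> good N A B (kep_restr A B h' \<nu>)"
      using Cons.IH[of h' k'] k' by (simp add: h'_def)
    then show ?thesis
      using paths_Cons[OF src_inf_edges] True k' Cons.prems(1) r by auto
  next
    case False
    then have "src e \<notin> inf_vertices N A B \<or> B (rng e) (src e) = 0"
      using k'(2) by (auto simp: inf_edges_def)
    then have "good N A B h'"
      using res_zero[OF k'(2)] k'(2) src_kep_edges by (auto simp: good_def h'_def)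
    then have "good N A B (kep_restr A B h' \<nu>)" using good_pres k'(4) by (simp add: h'_def)
    then show ?thesis using r by simp
  qed
qed



lemma rel_sub: "kep_rel N A B \<subseteq> (UNIV \<times> {1..N}) \<times> (UNIV \<times> {1..N})"
  by (auto simp: kep_rel_def)

lemma self_in_class: "x \<in> UNIV \<times> {1..N} \<Longrightarrow> x \<in> kep_rel N A B `` {x}"
  by (auto simp: kep_rel_def)

lemma dir1:
  assumes "KEP_contracting N A B"
  shows "KEP_inf_contracting N A B"
proof -
  let ?R = "kep_rel N A B" and ?I = "inf_vertices N A B"
  obtain F where F: "F \<subseteq> G_B N A B" "finite F"
    "\<forall>c\<in>G_B N A B. \<exists>n. \<forall>k\<ge>n. \<forall>\<mu>\<in>paths {1..N} (kep_edges N A) (G_B_d c) k. G_B_restr N A B c \<mu> \<in> F"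
    using assms unfolding KEP_contracting_def contracting_def by blast
  define F' where "F' = {g \<in> UNIV \<times> ?I. ?R `` {g} \<in> F}"
  have sing: "?R `` {g} = {g}" if gI: "g \<in> UNIV \<times> ?I" for g
  proof -
    obtain k i where g: "g = (k,i)" "i \<in> ?I" using gI by (cases g) auto
    have i1: "i \<in> {1..N}" using g inf_sub(1)[of N A B] by auto
    have "x = g" if "x \<in> ?R `` {g}" for x
    proof -
      obtain k' i' where x: "x = (k',i')" by (cases x) auto
      have "((k,i),(k',i')) \<in> ?R" using that g x by simp
      moreover then have "i' = i" by (auto simp: kep_rel_def)
      ultimately show ?thesis using inf_inj[OF g(2)] g x by blast
    qed
    moreover have "g \<in> ?R `` {g}" using self_in_class i1 g by auto
    ultimately show ?thesis by blast
  qed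
  have inj: "inj_on (\<lambda>g. ?R `` {g}) F'"
    unfolding inj_on_def F'_def using sing by auto
  have "finite F'"
  proof (rule finite_imageD[OF _ inj])
    show "finite ((\<lambda>g. ?R `` {g}) ` F')" using F(2) by (rule finite_subset[rotated]) (auto simp: F'_def)
  qed
  moreover have "F' \<subseteq> UNIV \<times> ?I" by (auto simp: F'_def)
  moreover have "\<forall>g\<in>UNIV \<times> ?I. \<exists>n. \<forall>k\<ge>n. \<forall>\<mu>\<in>paths ?I (inf_edges N A B) (snd g) k. kep_restr A B g \<mu> \<in> F'"
  proof
    fix g :: "int \<times> nat" assume g: "g \<in> UNIV \<times> ?I"
    define c where "c = ?R `` {g}"
    have g1: "g \<in> UNIV \<times> {1..N}" using g inf_sub(1)[of N A B] by auto
    have c: "c \<in> G_B N A B" unfolding c_def G_B_def using g1 by (rule quotientI)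
    have some: "(SOME h. h \<in> c) = g" using sing[OF g] by (simp add: c_def)
    obtain n where n: "\<forall>k\<ge>n. \<forall>\<mu>\<in>paths {1..N} (kep_edges N A) (G_B_d c) k. G_B_restr N A B c \<mu> \<in> F"
      using F(3) c by blast
    have "kep_restr A B g \<mu> \<in> F'" if k: "k \<ge> n" and \<mu>: "\<mu> \<in> paths ?I (inf_edges N A B) (snd g) k" for k \<mu>
    proof -
      have "\<mu> \<in> paths {1..N} (kep_edges N A) (snd g) k" using paths_mono[OF inf_sub \<mu>] .
      then have "?R `` {kep_restr A B g \<mu>} \<in> F" using n k some
        by (auto simp: G_B_d_def G_B_restr_def)
      moreover have "kep_restr A B g \<mu> \<in> UNIV \<times> ?I"
      proof (cases "\<mu> = []")
        case True then show ?thesis using g by (simp add: kep_restr_def)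
      next
        case False
        then have "last \<mu> \<in> inf_edges N A B" using \<mu> by (auto simp: paths_def)
        then show ?thesis using False src_inf_edges by (simp add: kep_restr_def)
      qed
      ultimately show ?thesis by (simp add: F'_def)
    qed
    then show "\<exists>n. \<forall>k\<ge>n. \<forall>\<mu>\<in>paths ?I (inf_edges N A B) (snd g) k. kep_restr A B g \<mu> \<in> F'" by blast
  qed
  ultimately show ?thesis unfolding KEP_inf_contracting_def contracting_def by blast
qed

lemma dir2:
  assumes "KEP_inf_contracting N A B"
  shows "KEP_contracting N A B"
proof -
  let ?R = "kep_rel N A B" and ?I = "inf_vertices N A B"
  obtain F0 where F0: "F0 \<subseteq> UNIV \<times> ?I" "finite F0"
    "\<forall>g\<in>UNIV \<times> ?I. \<exists>n. \<forall>k\<ge>n. \<forall>\<mu>\<in>paths ?I (inf_edges N A B) (snd g) k. kep_restr A B g \<mu> \<in> F0"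
    using assms unfolding KEP_inf_contracting_def contracting_def by blast
  define F where "F = (\<lambda>x. ?R `` {x}) ` {h. good N A B h} \<union> (\<lambda>x. ?R `` {x}) ` F0"
  have "(\<lambda>x. ?R `` {x}) ` {h. good N A B h} \<subseteq>
      (\<Union>j\<in>{1..N} - ?I. G_B_iso N A B j) \<union> (\<lambda>l. ?R `` {(0,l)}) ` {1..N}"
    by (auto simp: good_def G_B_iso_eq)
  moreover have "finite ((\<Union>j\<in>{1..N} - ?I. G_B_iso N A B j) \<union> (\<lambda>l. ?R `` {(0,l)}) ` {1..N})"
    by (auto simp: inf_vertices_def)
  ultimately have finF: "finite F" using F0(2) unfolding F_def
    by (meson finite_UnI finite_imageI finite_subset)
  have sub: "{h. good N A B h} \<union> F0 \<subseteq> UNIV \<times> {1..N}"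
    using F0(1) inf_sub(1)[of N A B] by (auto simp: good_def)
  have FG: "F \<subseteq> G_B N A B"
    unfolding F_def G_B_def using sub by (auto intro: quotientI)
  have "\<exists>n. \<forall>k\<ge>n. \<forall>\<mu>\<in>paths {1..N} (kep_edges N A) (G_B_d c) k. G_B_restr N A B c \<mu> \<in> F"
    if c: "c \<in> G_B N A B" for c
  proof -
    obtain x where x: "x \<in> UNIV \<times> {1..N}" "c = ?R `` {x}" using c unfolding G_B_def by (rule quotientE)
    define g where "g = (SOME h. h \<in> c)"
    have "g \<in> c" unfolding g_def using self_in_class[OF x(1)] x(2) by (metis someI)
    then have g1: "snd g \<in> {1..N}" using x by (auto simp: kep_rel_def)
    have d: "G_B_d c = snd g" by (simp add: G_B_d_def g_def)
    have rs: "G_B_restr N A B c \<mu> = ?R `` {kep_restr A B g \<mu>}" for \<mu>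
      by (simp add: G_B_restr_def g_def)
    show ?thesis
    proof (cases "snd g \<in> ?I")
      case False
      then have "good N A B g" using g1 by (simp add: good_def)
      then have "\<forall>k\<ge>0. \<forall>\<mu>\<in>paths {1..N} (kep_edges N A) (G_B_d c) k. G_B_restr N A B c \<mu> \<in> F"
        using good_pres unfolding d rs F_def by blast
      then show ?thesis by blast
    next
      case True
      then have "g \<in> UNIV \<times> ?I" by (cases g) auto
      then obtain n where n: "\<forall>k\<ge>n. \<forall>\<mu>\<in>paths ?I (inf_edges N A B) (snd g) k. kep_restr A B g \<mu> \<in> F0"
        using F0(3) by blast
      have "G_B_restr N A B c \<mu> \<in> F" if "k \<ge> n" "\<mu> \<in> paths {1..N} (kep_edges N A) (G_B_d c) k" for k \<mu>
        using split_path[OF True, of \<mu> k] that n unfolding d rs F_def by blast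
      then show ?thesis by blast
    qed
  qed
  then show ?thesis unfolding KEP_contracting_def contracting_def using finF FG by blast
qed

theorem proposition3p2:
  fixes N :: nat and A :: "nat \<Rightarrow> nat \<Rightarrow> nat" and B :: "nat \<Rightarrow> nat \<Rightarrow> int"
  assumes "katsura_pair N A B"
  shows "KEP_contracting N A B \<longleftrightarrow> KEP_inf_contracting N A B"
  using dir1 dir2 by blast

end
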